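(* Let $G$ be an $A$-AW graph with a pendant vertex, and let $t\in T_{V(G)}^{A(G)}(1)$. Then $\overline{G}$ is $N$-AW if and only if $\gcd(1+t,\ell)=1$.
   Context: All graphs are finite and simple; $\overline{G}$ is the complement. Fix an integer $\ell\ge2$; labelings are maps $V(G)\to\mathbb{Z}_\ell$. In the neighborhood Lights Out game, toggling a vertex $w$ adds $1$ (mod $\ell$) to the label of each vertex of the closed neighborhood $N[w]$; in the adjacency Lights Out game, toggling $w$ adds $1$ to the label of each vertex of the open neighborhood $N(w)$. A game is won when all labels are $0$. A graph is $N$-AW (resp. $A$-AW) if every labeling is winnable in the neighborhood (resp. adjacency) game. For $U\subseteq V(G)$ and $r\in\mathbb{Z}_\ell$, $T_U^{A(G)}(r)\subseteq\mathbb{Z}_\ell$ is the set of all $t$ such that the adjacency game on $G$ starting from the labeling that is $r$ on $U$ and $0$ elsewhere can be won with the vertices of $U$ toggled a total of $t$ times (mod $\ell$). The gcd of an element of $\mathbb{Z}_\ell$ with $\ell$ is computed using any integer representative. *)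

theory Defs
  imports "HOL-Number_Theory.Cong"
begin

text \<open>A finite simple graph: finite vertex set V and a symmetric irreflexive
edge relation E on V.  Labelings and toggle counts are int-valued functions,
read modulo l (i.e. elements of Z_l).\<close>

definition simple_graph :: "'a set \<Rightarrow> ('a \<Rightarrow> 'a \<Rightarrow> bool) \<Rightarrow> bool" where
  "simple_graph V E \<longleftrightarrow> finite V \<and> (\<forall>u v. E u v \<longrightarrow> u \<in> V \<and> v \<in> V)
     \<and> (\<forall>u v. E u v \<longrightarrow> E v u) \<and> (\<forall>v. \<not> E v v)"

definition complement_graph :: "'a set \<Rightarrow> ('a \<Rightarrow> 'a \<Rightarrow> bool) \<Rightarrow> 'a \<Rightarrow> 'a \<Rightarrow> bool" where
  "complement_graph V E u v \<longleftrightarrow> u \<in> V \<and> v \<in> V \<and> u \<noteq> v \<and> \<not> E u v"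

definition has_pendant_vertex :: "'a set \<Rightarrow> ('a \<Rightarrow> 'a \<Rightarrow> bool) \<Rightarrow> bool" where
  "has_pendant_vertex V E \<longleftrightarrow> (\<exists>v\<in>V. card {w\<in>V. E v w} = 1)"

text \<open>Adjacency game: toggling w x w times adds x w to every vertex of N(w).
The toggle vector x wins from labeling b.\<close>
definition A_wins :: "int \<Rightarrow> 'a set \<Rightarrow> ('a \<Rightarrow> 'a \<Rightarrow> bool) \<Rightarrow> ('a \<Rightarrow> int) \<Rightarrow> ('a \<Rightarrow> int) \<Rightarrow> bool" where
  "A_wins l V E b x \<longleftrightarrow> (\<forall>v\<in>V. [b v + (\<Sum>w\<in>{w\<in>V. E w v}. x w) = 0] (mod l))"

text \<open>Neighborhood game: toggling w adds to every vertex of N[w].\<close>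
definition N_wins :: "int \<Rightarrow> 'a set \<Rightarrow> ('a \<Rightarrow> 'a \<Rightarrow> bool) \<Rightarrow> ('a \<Rightarrow> int) \<Rightarrow> ('a \<Rightarrow> int) \<Rightarrow> bool" where
  "N_wins l V E b x \<longleftrightarrow> (\<forall>v\<in>V. [b v + (\<Sum>w\<in>{w\<in>V. w = v \<or> E w v}. x w) = 0] (mod l))"

definition A_AW :: "int \<Rightarrow> 'a set \<Rightarrow> ('a \<Rightarrow> 'a \<Rightarrow> bool) \<Rightarrow> bool" where
  "A_AW l V E \<longleftrightarrow> (\<forall>b. \<exists>x. A_wins l V E b x)"

definition N_AW :: "int \<Rightarrow> 'a set \<Rightarrow> ('a \<Rightarrow> 'a \<Rightarrow> bool) \<Rightarrow> bool" where
  "N_AW l V E \<longleftrightarrow> (\<forall>b. \<exists>x. N_wins l V E b x)"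

text \<open>T_U^{A(G)}(r): all t (as integer representatives of Z_l) such that the adjacency
game from the labeling r on U, 0 elsewhere, can be won with the vertices of U toggled
t times in total (mod l).\<close>
definition T_A :: "int \<Rightarrow> 'a set \<Rightarrow> ('a \<Rightarrow> 'a \<Rightarrow> bool) \<Rightarrow> 'a set \<Rightarrow> int \<Rightarrow> int set" where
  "T_A l V E U r = {t. \<exists>x. A_wins l V E (\<lambda>v. if v \<in> U then r else 0) x
                          \<and> [(\<Sum>u\<in>U. x u) = t] (mod l)}"

end

theory Submission
  imports Defs
begin

lemma comp_sum:
  fixes y :: "'a \<Rightarrow> int"
  assumes "simple_graph V E" "v \<in> V"
  shows "(\<Sum>w\<in>{w\<in>V. w = v \<or> complement_graph V E w v}. y w)
         = (\<Sum>w\<in>V. y w) - (\<Sum>w\<in>{w\<in>V. E w v}. y w)"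
proof -
  have fin: "finite V" using assms(1) by (simp add: simple_graph_def)
  have irr: "\<not> E v v" using assms(1) by (simp add: simple_graph_def)
  have eq: "{w\<in>V. w = v \<or> complement_graph V E w v} = V - {w\<in>V. E w v}"
    using assms irr by (auto simp: complement_graph_def)
  show ?thesis unfolding eq using fin
    by (intro sum_diff) auto
qed

theorem corollary3p7:
  fixes l :: int and V :: "'a set" and E :: "'a \<Rightarrow> 'a \<Rightarrow> bool" and t :: int
  assumes "l \<ge> 2"
    and "simple_graph V E"
    and "A_AW l V E"
    and "has_pendant_vertex V E"
    and "t \<in> T_A l V E V 1"
  shows "N_AW l V (complement_graph V E) \<longleftrightarrow> gcd (1 + t) l = 1"
proof -
  have fin: "finite V" using assms(2) by (simp add: simple_graph_def)
  have sym: "\<And>u w. E u w = E w u" using assms(2) unfolding simple_graph_def by blast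
  obtain x where xw: "\<And>v. v \<in> V \<Longrightarrow> l dvd (1 + (\<Sum>w\<in>{w\<in>V. E w v}. x w))"
    and xs: "l dvd ((\<Sum>w\<in>V. x w) - t)"
    using assms(5) unfolding T_A_def A_wins_def by (auto simp: cong_0_iff cong_iff_dvd_diff)
  obtain v0 where v0: "v0 \<in> V" using assms(4) unfolding has_pendant_vertex_def by blast
  show ?thesis
  proof
    assume NA: "N_AW l V (complement_graph V E)"
    define d where "d = gcd (1 + t) l"
    have dpos: "d > 0" using assms(1) by (simp add: d_def)
    show "gcd (1 + t) l = 1"
    proof (rule ccontr)
      assume "gcd (1 + t) l \<noteq> 1"
      hence "d \<noteq> 1" using d_def by simp
      hence d1: "d > 1" using dpos by linarith
      have dl: "d dvd l" by (simp add: d_def)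
      have dt: "d dvd (1 + t)" by (simp add: d_def)
      define c where "c = l div d"
      have lcd: "l = c * d" using dl by (simp add: c_def)
      have c0: "c \<noteq> 0" using lcd assms(1) by auto
      have "\<exists>v\<in>V. \<not> d dvd x v"
      proof (rule ccontr)
        assume "\<not> ?thesis"
        hence "\<forall>v\<in>V. d dvd x v" by blast
        hence "d dvd (\<Sum>w\<in>{w\<in>V. E w v0}. x w)" by (intro dvd_sum) auto
        moreover have "d dvd (1 + (\<Sum>w\<in>{w\<in>V. E w v0}. x w))"
          using xw[OF v0] dl dvd_trans by blast
        ultimately have "d dvd 1" using dvd_add_left_iff by blast
        thus False using d1 by simp
      qed
      then obtain v where v: "v \<in> V" "\<not> d dvd x v" by blast
      define y where "y = (\<lambda>w. c * x w)"
      obtain z where z: "\<And>w. w \<in> V \<Longrightarrow>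
          l dvd ((if w = v then 1 else 0) + (\<Sum>u\<in>{u\<in>V. u = w \<or> complement_graph V E u w}. z u))"
      proof -
        have "\<exists>z. N_wins l V (complement_graph V E) (\<lambda>w. if w = v then 1 else 0) z"
          using NA unfolding N_AW_def by blast
        then show ?thesis using that by (auto simp: N_wins_def cong_0_iff)
      qed
      have z': "\<And>w. w \<in> V \<Longrightarrow>
          l dvd ((if w = v then 1 else 0) + (\<Sum>u\<in>V. if \<not> E u w then z u else 0))"
      proof -
        fix w assume w: "w \<in> V"
        have "(\<Sum>u\<in>{u\<in>V. u = w \<or> complement_graph V E u w}. z u)
            = (\<Sum>u\<in>V. z u) - (\<Sum>u\<in>{u\<in>V. E u w}. z u)" by (rule comp_sum[OF assms(2) w])
        also have "\<dots> = (\<Sum>u\<in>V. if \<not> E u w then z u else 0)"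
        proof -
          have "(\<Sum>u\<in>V. z u) = (\<Sum>u\<in>V. if \<not> E u w then z u else 0) + (\<Sum>u\<in>V. if E u w then z u else 0)"
            by (subst sum.distrib[symmetric]) (rule sum.cong, auto)
          moreover have "(\<Sum>u\<in>V. if E u w then z u else 0) = (\<Sum>u\<in>{u\<in>V. E u w}. z u)"
            using fin by (simp add: sum.inter_filter)
          ultimately show ?thesis by simp
        qed
        finally show "l dvd ((if w = v then 1 else 0) + (\<Sum>u\<in>V. if \<not> E u w then z u else 0))"
          using z[OF w] by simp
      qed
      have A: "l dvd (\<Sum>w\<in>V. y w * ((if w = v then 1 else 0) + (\<Sum>u\<in>V. if \<not> E u w then z u else 0)))"
        by (intro dvd_sum) (simp add: z')
      have B: "(\<Sum>w\<in>V. y w * ((if w = v then 1 else 0) + (\<Sum>u\<in>V. if \<not> E u w then z u else 0)))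
          = y v + (\<Sum>u\<in>V. z u * (\<Sum>w\<in>V. if \<not> E w u then y w else 0))"
      proof -
        have "(\<Sum>w\<in>V. y w * ((if w = v then 1 else 0) + (\<Sum>u\<in>V. if \<not> E u w then z u else 0)))
          = (\<Sum>w\<in>V. y w * (if w = v then 1 else 0)) + (\<Sum>w\<in>V. \<Sum>u\<in>V. y w * (if \<not> E u w then z u else 0))"
          by (simp add: distrib_left sum.distrib sum_distrib_left)
        also have "(\<Sum>w\<in>V. y w * (if w = v then 1 else 0)) = y v"
          using fin v(1) by (simp add: if_distrib cong: if_cong)
        also have "(\<Sum>w\<in>V. \<Sum>u\<in>V. y w * (if \<not> E u w then z u else 0))
            = (\<Sum>u\<in>V. \<Sum>w\<in>V. z u * (if \<not> E w u then y w else 0))"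
          by (subst sum.swap) (rule sum.cong, simp, rule sum.cong, simp, metis sym mult.commute mult_zero_right)
        also have "\<dots> = (\<Sum>u\<in>V. z u * (\<Sum>w\<in>V. if \<not> E w u then y w else 0))"
          by (simp add: sum_distrib_left)
        finally show ?thesis .
      qed
      have C: "l dvd (\<Sum>u\<in>V. z u * (\<Sum>w\<in>V. if \<not> E w u then y w else 0))"
      proof (rule dvd_sum, rule dvd_mult)
        fix u assume u: "u \<in> V"
        have s1: "(\<Sum>w\<in>V. y w) = (\<Sum>w\<in>V. if \<not> E w u then y w else 0) + (\<Sum>w\<in>V. if E w u then y w else 0)"
          by (subst sum.distrib[symmetric]) (rule sum.cong, auto)
        have s2: "(\<Sum>w\<in>V. if E w u then y w else 0) = c * (\<Sum>w\<in>{w\<in>V. E w u}. x w)"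
          using fin by (simp add: sum.inter_filter y_def sum_distrib_left if_distrib cong: if_cong)
        have s3: "(\<Sum>w\<in>V. y w) = c * (\<Sum>w\<in>V. x w)" by (simp add: y_def sum_distrib_left)
        have eq: "(\<Sum>w\<in>V. if \<not> E w u then y w else 0)
           = c * ((\<Sum>w\<in>V. x w) - t) - c * (1 + (\<Sum>w\<in>{w\<in>V. E w u}. x w)) + c * (1 + t)"
          using s1 s2 s3 by (simp add: algebra_simps)
        have f3: "l dvd c * (1 + t)" using dt lcd by (auto simp: mult_dvd_mono)
        have f1: "l dvd c * ((\<Sum>w\<in>V. x w) - t)" using xs by simp
        have f2: "l dvd c * (1 + (\<Sum>w\<in>{w\<in>V. E w u}. x w))" using xw[OF u] by simp
        show "l dvd (\<Sum>w\<in>V. if \<not> E w u then y w else 0)"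
          unfolding eq by (rule dvd_add[OF dvd_diff[OF f1 f2] f3])
      qed
      have "l dvd y v + (\<Sum>u\<in>V. z u * (\<Sum>w\<in>V. if \<not> E w u then y w else 0))"
        using A unfolding B .
      hence "l dvd y v" using dvd_add_left_iff[OF C] by blast
      hence "c * d dvd c * x v" using lcd by (simp add: y_def)
      hence "d dvd x v" using c0 by simp
      thus False using v(2) by simp
    qed
  next
    assume g: "gcd (1 + t) l = 1"
    hence "coprime (1 + t) l" by (simp add: coprime_iff_gcd_eq_1)
    then obtain a where a: "[(1 + t) * a = 1] (mod l)" using cong_solve_coprime_int by blast
    hence adv: "l dvd ((1 + t) * a - 1)" by (simp add: cong_iff_dvd_diff)
    show "N_AW l V (complement_graph V E)"
      unfolding N_AW_def
    proof
      fix b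
      obtain u where u: "\<And>v. v \<in> V \<Longrightarrow> l dvd (- b v + (\<Sum>w\<in>{w\<in>V. E w v}. u w))"
      proof -
        have "\<exists>u. A_wins l V E (\<lambda>v. - b v) u"
          using assms(3) unfolding A_AW_def by blast
        then show ?thesis using that by (auto simp: A_wins_def cong_0_iff)
      qed
      define c where "c = - (\<Sum>w\<in>V. u w) * a"
      define y where "y = (\<lambda>w. u w + c * x w)"
      have "N_wins l V (complement_graph V E) b y"
        unfolding N_wins_def cong_0_iff
      proof
        fix v assume v: "v \<in> V"
        have eq: "b v + (\<Sum>w\<in>{w\<in>V. w = v \<or> complement_graph V E w v}. y w)
          = - (- b v + (\<Sum>w\<in>{w\<in>V. E w v}. u w)) - c * (1 + (\<Sum>w\<in>{w\<in>V. E w v}. x w))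
            + c * ((\<Sum>w\<in>V. x w) - t) - (\<Sum>w\<in>V. u w) * ((1 + t) * a - 1)"
        proof -
          have e1: "(\<Sum>w\<in>V. y w) = (\<Sum>w\<in>V. u w) + c * (\<Sum>w\<in>V. x w)"
            by (simp add: y_def sum.distrib sum_distrib_left)
          have e2: "(\<Sum>w\<in>{w\<in>V. E w v}. y w) = (\<Sum>w\<in>{w\<in>V. E w v}. u w) + c * (\<Sum>w\<in>{w\<in>V. E w v}. x w)"
            by (simp add: y_def sum.distrib sum_distrib_left)
          have e3: "- (\<Sum>w\<in>V. u w) * ((1 + t) * a - 1) = (\<Sum>w\<in>V. u w) + c * (1 + t)"
            by (simp add: c_def algebra_simps)
          show ?thesis unfolding comp_sum[OF assms(2) v] e1 e2
            using e3 by (simp add: algebra_simps)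
        qed
        show "l dvd (b v + (\<Sum>w\<in>{w\<in>V. w = v \<or> complement_graph V E w v}. y w))"
          unfolding eq
          by (rule dvd_diff[OF dvd_add[OF dvd_diff[OF dvd_minus_iff[THEN iffD2, OF u[OF v]] dvd_mult[OF xw[OF v]]] dvd_mult[OF xs]] dvd_mult[OF adv]])
      qed
      thus "\<exists>y. N_wins l V (complement_graph V E) b y" by blast
    qed
  qed
qed

end
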